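(* Let $k$ be finite, $L\in\mathbb{R}^{k\times k}$ any nonnegative task loss matrix, $\Phi:\mathbb{R}^k\times\{1,\dots,k\}\to\mathbb{R}$ a surrogate loss that is continuous and bounded from below, and $\mathcal{F}\subseteq\mathbb{R}^k$ a subspace of scores. Then $$H_{\Phi,L,\mathcal{F}}(\varepsilon)=\min_{i,j\in\mathrm{pred}(\mathcal{F}),\,i\ne j}H_{ij}(\varepsilon),$$ where $\mathrm{pred}(\mathcal{F})=\{\mathrm{pred}(f):f\in\mathcal{F}\}$ and $$H_{ij}(\varepsilon)=\inf_{f,q}\ \delta\phi(f,q)\ \text{ s.t. } \ell_i(q)\le\ell_j(q)-\varepsilon;\ \ell_i(q)\le\ell_c(q)\ \forall c\in\mathrm{pred}(\mathcal{F});\ f_j\ge f_c\ \forall c\in\mathrm{pred}(\mathcal{F});\ f\in\mathcal{F};\ q\in\Delta_k,$$ with $\ell_c(q)=(Lq)_c$.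
   Context: $\mathrm{pred}(f)$ is the smallest index maximizing $f_c$. For $q\in\Delta_k$: $\ell(f,q)=\sum_cq_cL(\mathrm{pred}(f),c)$, $\phi(f,q)=\sum_cq_c\Phi(f,c)$, $\delta\ell(f,q)=\ell(f,q)-\inf_{\hat f\in\mathcal{F}}\ell(\hat f,q)$, $\delta\phi(f,q)=\phi(f,q)-\inf_{\hat f\in\mathcal{F}}\phi(\hat f,q)$. Calibration function: $H_{\Phi,L,\mathcal{F}}(\varepsilon)=\inf\{\delta\phi(f,q):f\in\mathcal{F},q\in\Delta_k,\delta\ell(f,q)\ge\varepsilon\}$ ($+\infty$ if empty). Infima over empty sets are $+\infty$. *)

theory Defs
  imports "HOL-Analysis.Analysis" "HOL-Library.Extended_Real"
begin

text \<open>Classes are the elements of a finite, well-ordered type 'n (k = CARD('n)).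
Scores are vectors f :: (real,'n) vec; the task loss is a matrix L :: ((real,'n) vec,'n) vec with
entry L(i,c) = L$i$c; the surrogate is Phi :: (real,'n) vec => 'n => real.\<close>

definition pred :: "(real,'n::{finite,wellorder}) vec \<Rightarrow> 'n" where
  "pred f = (LEAST c. \<forall>c'. f$c' \<le> f$c)"

definition prob_simplex :: "(real,'n::finite) vec set" where
  "prob_simplex = {q. (\<forall>c. 0 \<le> q$c) \<and> (\<Sum>c\<in>UNIV. q$c) = 1}"

definition task_loss :: "((real,'n::{finite,wellorder}) vec,'n) vec \<Rightarrow> (real,'n) vec \<Rightarrow> (real,'n) vec \<Rightarrow> real" where
  "task_loss L f q = (\<Sum>c\<in>UNIV. q$c * L$(pred f)$c)"

definition surr_loss :: "(real^('n::finite) \<Rightarrow> 'n \<Rightarrow> real) \<Rightarrow> (real,'n) vec \<Rightarrow> (real,'n) vec \<Rightarrow> real" where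
  "surr_loss Phi f q = (\<Sum>c\<in>UNIV. q$c * Phi f c)"

definition excess_task :: "((real,'n::{finite,wellorder}) vec,'n) vec \<Rightarrow> ((real,'n) vec) set \<Rightarrow> (real,'n) vec \<Rightarrow> (real,'n) vec \<Rightarrow> real" where
  "excess_task L F f q = task_loss L f q - (INF g\<in>F. task_loss L g q)"

definition excess_surr :: "((real,'n) vec \<Rightarrow> 'n \<Rightarrow> real) \<Rightarrow> ((real,'n) vec) set \<Rightarrow> real^('n::finite) \<Rightarrow> (real,'n) vec \<Rightarrow> real" where
  "excess_surr Phi F f q = surr_loss Phi f q - (INF g\<in>F. surr_loss Phi g q)"

text \<open>Calibration function (infimum over the empty set is +infinity).\<close>
definition calib :: "((real,'n::{finite,wellorder}) vec \<Rightarrow> 'n \<Rightarrow> real) \<Rightarrow> ((real,'n) vec,'n) vec \<Rightarrow> ((real,'n) vec) set \<Rightarrow> real \<Rightarrow> ereal" where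
  "calib Phi L F eps = Inf {ereal (excess_surr Phi F f q) | f q.
      f \<in> F \<and> q \<in> prob_simplex \<and> excess_task L F f q \<ge> eps}"

definition ell_c :: "real^('n::finite)^'n \<Rightarrow> (real,'n) vec \<Rightarrow> 'n \<Rightarrow> real" where
  "ell_c L q c = (L *v q)$c"

definition H_ij :: "((real,'n::{finite,wellorder}) vec \<Rightarrow> 'n \<Rightarrow> real) \<Rightarrow> ((real,'n) vec,'n) vec \<Rightarrow> ((real,'n) vec) set \<Rightarrow> 'n \<Rightarrow> 'n \<Rightarrow> real \<Rightarrow> ereal" where
  "H_ij Phi L F i j eps = Inf {ereal (excess_surr Phi F f q) | f q.
      f \<in> F \<and> q \<in> prob_simplex \<and>
      ell_c L q i \<le> ell_c L q j - eps \<and>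
      (\<forall>c\<in>pred ` F. ell_c L q i \<le> ell_c L q c) \<and>
      (\<forall>c\<in>pred ` F. f$c \<le> f$j)}"

end

theory Submission
  imports Defs
begin

lemma pred_max:
  fixes f :: "(real,'n::{finite,wellorder}) vec"
  shows "f$c \<le> f$(pred f)"
proof -
  obtain m where m: "f$m = Max (range (\<lambda>c. f$c))"
  proof -
    have "Max (range (\<lambda>c. f$c)) \<in> range (\<lambda>c. f$c)" by (rule Max_in) auto
    then obtain m where "Max (range (\<lambda>c. f$c)) = f$m" by (rule rangeE)
    then show ?thesis by (intro that[of m]) simp
  qed
  have "\<forall>c'. f$c' \<le> f$m" using m by simp
  then have "\<forall>c'. f$c' \<le> f$(pred f)" unfolding pred_def by (rule LeastI)
  then show ?thesis by blast
qed

lemma pred_le: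
  fixes f :: "(real,'n::{finite,wellorder}) vec"
  shows "(\<forall>c'. f$c' \<le> f$c) \<Longrightarrow> pred f \<le> c"
  unfolding pred_def by (rule Least_le)

lemma task_ell: "task_loss L f q = ell_c L q (pred f)"
  unfolding task_loss_def ell_c_def matrix_vector_mult_def by (simp add: mult.commute)

lemma inf_task:
  assumes "subspace F"
  shows "(INF g\<in>F. task_loss L g q) = Min ((\<lambda>c. ell_c L q c) ` pred ` F)"
    "finite ((\<lambda>c. ell_c L q c) ` pred ` F)" "(\<lambda>c. ell_c L q c) ` pred ` F \<noteq> {}"
proof -
  have e: "(\<lambda>g. task_loss L g q) ` F = (\<lambda>c. ell_c L q c) ` pred ` F"
    by (simp add: task_ell image_image)
  show fin: "finite ((\<lambda>c. ell_c L q c) ` pred ` F)" by simp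
  show ne: "(\<lambda>c. ell_c L q c) ` pred ` F \<noteq> {}" using subspace_0[OF assms] by auto
  show "(INF g\<in>F. task_loss L g q) = Min ((\<lambda>c. ell_c L q c) ` pred ` F)"
    using e cInf_eq_Min[OF fin ne] by simp
qed

theorem lemma10:
  fixes L :: "((real,'n::{finite,wellorder}) vec,'n) vec"
    and Phi :: "(real,'n) vec \<Rightarrow> 'n \<Rightarrow> real"
    and F :: "((real,'n) vec) set"
    and eps :: real
  assumes L_nonneg: "\<And>i c. 0 \<le> L$i$c"
    and Phi_cont: "\<And>c. continuous_on UNIV (\<lambda>f. Phi f c)"
    and Phi_bdd: "\<exists>B. \<forall>f c. B \<le> Phi f c"
    and F_subspace: "subspace F"
    and eps_pos: "0 < eps"
  shows "calib Phi L F eps =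
           (INF ij \<in> {(i, j). i \<in> pred ` F \<and> j \<in> pred ` F \<and> i \<noteq> j}.
              H_ij Phi L F (fst ij) (snd ij) eps)"
proof (rule antisym)
  let ?E = "\<lambda>q c. ell_c L q c"
  show "(INF ij \<in> {(i, j). i \<in> pred ` F \<and> j \<in> pred ` F \<and> i \<noteq> j}.
              H_ij Phi L F (fst ij) (snd ij) eps) \<le> calib Phi L F eps"
    unfolding calib_def
  proof (rule Inf_greatest)
    fix x assume "x \<in> {ereal (excess_surr Phi F f q) | f q.
      f \<in> F \<and> q \<in> prob_simplex \<and> excess_task L F f q \<ge> eps}"
    then obtain f q where x: "x = ereal (excess_surr Phi F f q)" and fF: "f \<in> F"
      and qS: "q \<in> prob_simplex" and ex: "excess_task L F f q \<ge> eps" by blast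
    define j where "j = pred f"
    define M where "M = Min (?E q ` pred ` F)"
    obtain i where iF: "i \<in> pred ` F" and iM: "?E q i = M"
    proof -
      have "M \<in> ?E q ` pred ` F" unfolding M_def by (rule Min_in[OF inf_task(2,3)[OF F_subspace]])
      then show ?thesis using that by blast
    qed
    have exe: "excess_task L F f q = ?E q j - M"
      unfolding excess_task_def inf_task(1)[OF F_subspace] unfolding M_def j_def task_ell by simp
    have c1: "?E q i \<le> ?E q j - eps" using ex exe iM by simp
    have c2: "\<forall>c\<in>pred ` F. ?E q i \<le> ?E q c"
      using iM Min_le[OF inf_task(2)[OF F_subspace, of L q]] unfolding M_def by auto
    have c3: "\<forall>c\<in>pred ` F. f$c \<le> f$j" unfolding j_def using pred_max by blast
    have jF: "j \<in> pred ` F" using fF j_def by blast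
    have ij: "i \<noteq> j" using c1 eps_pos by auto
    have "H_ij Phi L F i j eps \<le> x"
      unfolding H_ij_def x
      by (rule Inf_lower) (use fF qS c1 c2 c3 in blast)
    then show "(INF ij \<in> {(i, j). i \<in> pred ` F \<and> j \<in> pred ` F \<and> i \<noteq> j}.
              H_ij Phi L F (fst ij) (snd ij) eps) \<le> x"
      by (intro INF_lower2[of "(i,j)"]) (use iF jF ij in auto)
  qed
next
  show "calib Phi L F eps \<le> (INF ij \<in> {(i, j). i \<in> pred ` F \<and> j \<in> pred ` F \<and> i \<noteq> j}.
              H_ij Phi L F (fst ij) (snd ij) eps)"
  proof (rule INF_greatest)
    fix ij assume "ij \<in> {(i, j). i \<in> pred ` F \<and> j \<in> pred ` F \<and> i \<noteq> j}"
    then obtain i j where ijd: "ij = (i,j)" and iF: "i \<in> pred ` F" and jF: "j \<in> pred ` F"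
      by blast
    show "calib Phi L F eps \<le> H_ij Phi L F (fst ij) (snd ij) eps"
      unfolding ijd fst_conv snd_conv H_ij_def
    proof (rule Inf_greatest)
      fix x assume "x \<in> {ereal (excess_surr Phi F f q) | f q.
      f \<in> F \<and> q \<in> prob_simplex \<and>
      ell_c L q i \<le> ell_c L q j - eps \<and>
      (\<forall>c\<in>pred ` F. ell_c L q i \<le> ell_c L q c) \<and>
      (\<forall>c\<in>pred ` F. f$c \<le> f$j)}"
      then obtain f q where x: "x = ereal (excess_surr Phi F f q)" and fF: "f \<in> F"
        and qS: "q \<in> prob_simplex" and c1: "ell_c L q i \<le> ell_c L q j - eps"
        and c3: "\<forall>c\<in>pred ` F. f$c \<le> f$j" by blast
      obtain g where gF: "g \<in> F" and gj: "pred g = j" using jF by blast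
      define h where "h = (\<lambda>t::real. f + t *\<^sub>R g)"
      have hF: "\<And>t. h t \<in> F" unfolding h_def
        using F_subspace fF gF by (simp add: subspace_add subspace_scale)
      have hc: "\<And>t c. h t $ c = f$c + t * g$c" unfolding h_def by simp
      have fle: "\<And>c. f$c \<le> f$j"
        using pred_max[of f] c3 fF by (meson image_eqI order_trans)
      have gle: "\<And>c. g$c \<le> g$j" using pred_max[of g] gj by simp
      have glt: "\<And>c. c < j \<Longrightarrow> g$c < g$j"
      proof (rule ccontr)
        fix c assume cj: "c < j" and "\<not> g$c < g$j"
        then have "\<forall>c'. g$c' \<le> g$c" using gle by (meson not_less order_trans)
        then have "pred g \<le> c" by (rule pred_le)
        then show False using cj gj by simp
      qed
      have evc: "\<And>c. eventually (\<lambda>t. h t $ c \<le> h t $ j \<and> (c < j \<longrightarrow> h t $ c < h t $ j))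
                  (at_right 0)"
      proof -
        fix c
        show "eventually (\<lambda>t. h t $ c \<le> h t $ j \<and> (c < j \<longrightarrow> h t $ c < h t $ j)) (at_right 0)"
        proof (cases "f$c < f$j")
          case True
          have "((\<lambda>t. h t $ j - h t $ c) \<longlongrightarrow> (f$j + 0 * g$j) - (f$c + 0 * g$c)) (at_right 0)"
            unfolding hc by (intro tendsto_intros)
          then have "((\<lambda>t. h t $ j - h t $ c) \<longlongrightarrow> f$j - f$c) (at_right 0)" by simp
          then have "eventually (\<lambda>t. 0 < h t $ j - h t $ c) (at_right 0)"
            using True by (intro order_tendstoD(1)) auto
          then show ?thesis by eventually_elim auto
        next
          case False
          then have eq: "f$c = f$j" using fle[of c] by simp
          show ?thesis using eventually_at_right_less[of "0::real"]
          proof eventually_elim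
            case (elim t)
            have "h t $ j - h t $ c = t * (g$j - g$c)" unfolding hc eq by (simp add: algebra_simps)
            moreover have "0 \<le> t * (g$j - g$c)" using elim gle[of c] by simp
            moreover have "c < j \<longrightarrow> 0 < t * (g$j - g$c)" using elim glt[of c] by simp
            ultimately show ?case by auto
          qed
        qed
      qed
      have ev: "eventually (\<lambda>t. pred (h t) = j) (at_right 0)"
        using eventually_all_finite[of "\<lambda>t c. h t $ c \<le> h t $ j \<and> (c < j \<longrightarrow> h t $ c < h t $ j)", OF evc]
      proof eventually_elim
        case (elim t)
        show ?case unfolding pred_def
        proof (rule Least_equality)
          show "\<forall>c'. h t $ c' \<le> h t $ j" using elim by blast
          fix y assume "\<forall>c'. h t $ c' \<le> h t $ y"
          then show "j \<le> y" using elim by (meson not_le not_less)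
        qed
      qed
      have evcal: "eventually (\<lambda>t. calib Phi L F eps \<le> ereal (excess_surr Phi F (h t) q)) (at_right 0)"
        using ev
      proof eventually_elim
        case (elim t)
        have "excess_task L F (h t) q = ell_c L q j - Min ((\<lambda>c. ell_c L q c) ` pred ` F)"
          unfolding excess_task_def inf_task(1)[OF F_subspace] unfolding task_ell elim by simp
        moreover have "Min ((\<lambda>c. ell_c L q c) ` pred ` F) \<le> ell_c L q i"
          using Min_le[OF inf_task(2)[OF F_subspace, of L q]] iF by blast
        ultimately have "excess_task L F (h t) q \<ge> eps" using c1 by simp
        then show ?case unfolding calib_def
          by (intro Inf_lower) (use hF qS in blast)
      qed
      have hlim: "(h \<longlongrightarrow> f) (at_right 0)"
      proof -
        have "((\<lambda>t. f + t *\<^sub>R g) \<longlongrightarrow> f + 0 *\<^sub>R g) (at_right (0::real))"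
          by (intro tendsto_intros)
        then show ?thesis unfolding h_def by simp
      qed
      have plim: "\<And>c. ((\<lambda>t. Phi (h t) c) \<longlongrightarrow> Phi f c) (at_right 0)"
      proof -
        fix c
        have "isCont (\<lambda>f. Phi f c) f"
          using Phi_cont[of c] continuous_on_eq_continuous_at[of UNIV] by blast
        then show "((\<lambda>t. Phi (h t) c) \<longlongrightarrow> Phi f c) (at_right 0)"
          using isCont_tendsto_compose hlim by blast
      qed
      have slim: "((\<lambda>t. excess_surr Phi F (h t) q) \<longlongrightarrow> excess_surr Phi F f q) (at_right 0)"
        unfolding excess_surr_def surr_loss_def
        by (intro tendsto_intros plim)
      then have elim: "((\<lambda>t. ereal (excess_surr Phi F (h t) q)) \<longlongrightarrow> ereal (excess_surr Phi F f q)) (at_right 0)"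
        by (rule tendsto_ereal)
      show "calib Phi L F eps \<le> x" unfolding x
        by (rule tendsto_le[OF trivial_limit_at_right_real elim tendsto_const evcal])
    qed
  qed
qed

end
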